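(* Let $\Delta$ be a finite, flag, simply connected simplicial complex, with $\mathcal{P}_H$, $q$, $T$ and $p_n$ as in the context. There exists a constant $K$ such that $\mathrm{Area}_{\mathcal{P}_H}\big(p_n(q,\iota e)\,e^n\,p_n(\tau e,q)\big)\le K|n|^2$ for all $e\in\mathrm{Edge}(\Delta)$ and all $n\in\mathbb{Z}$.
   Context: $\mathrm{Edge}(\Delta)$ is the set of directed edges of $\Delta$; for $e$ in it, $\iota e$, $\tau e$ are its initial and terminal vertices and $\overline{e}$ is the reversed edge. $e_1\cdot\ldots\cdot e_l$ is a combinatorial path if $\tau e_i=\iota e_{i+1}$, and a combinatorial 1-cycle if also $\tau e_l=\iota e_1$. $\mathcal{P}_H=\langle\mathrm{Edge}(\Delta)\mid\mathcal{R}_H\rangle$ where $\mathcal{R}_H$ consists of the words $e\overline{e}$ ($e\in\mathrm{Edge}(\Delta)$) and $efg$, $e^{-1}f^{-1}g^{-1}$ for every combinatorial 1-cycle $e\cdot f\cdot g$. $\mathrm{Area}_{\mathcal{P}_H}(w)$ is the least $m$ such that $w$ is freely equal to $\prod_{i=1}^m x_ir_ix_i^{-1}$ with $r_i\in\mathcal{R}_H^{\pm1}$. For a letter $e$ and $k\in\mathbb{Z}$, $e^k$ is the word of $k$ copies of $e$ if $k\ge0$ and $|k|$ copies of $e^{-1}$ if $k<0$. Fix a vertex $q$ and a spanning tree $T$ of the 1-skeleton of $\Delta$; for $n\in\mathbb{Z}$ and vertices $u,v$, $p_n(u,v)=e_1^n\cdots e_l^n$ where $e_1\cdot\ldots\cdot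 e_l$ is the unique geodesic combinatorial path in $T$ from $u$ to $v$. *)

theory Defs
  imports "HOL-Analysis.Analysis"
begin

definition simplicial_complex :: "('v::finite) set set \<Rightarrow> bool" where
  "simplicial_complex \<Delta> \<longleftrightarrow> {} \<notin> \<Delta> \<and> (\<forall>\<sigma>\<in>\<Delta>. \<forall>\<tau>. \<tau> \<subseteq> \<sigma> \<and> \<tau> \<noteq> {} \<longrightarrow> \<tau> \<in> \<Delta>)"

definition vertices :: "'v set set \<Rightarrow> 'v set" where
  "vertices \<Delta> = \<Union>\<Delta>"

definition flag :: "'v set set \<Rightarrow> bool" where
  "flag \<Delta> \<longleftrightarrow> (\<forall>S. S \<noteq> {} \<and> S \<subseteq> vertices \<Delta> \<and>
       (\<forall>u\<in>S. \<forall>v\<in>S. u \<noteq> v \<longrightarrow> {u, v} \<in> \<Delta>) \<longrightarrow> S \<in> \<Delta>)"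

definition realization :: "('v::finite) set set \<Rightarrow> (real^'v) set" where
  "realization \<Delta> = (\<Union>\<sigma>\<in>\<Delta>. convex hull ((\<lambda>v. axis v (1::real)) ` \<sigma>))"

definition Edge :: "'v set set \<Rightarrow> ('v \<times> 'v) set" where
  "Edge \<Delta> = {(u, v). u \<noteq> v \<and> {u, v} \<in> \<Delta>}"

definition iota :: "'v \<times> 'v \<Rightarrow> 'v" where "iota e = fst e"
definition tau :: "'v \<times> 'v \<Rightarrow> 'v" where "tau e = snd e"
definition rev_edge :: "'v \<times> 'v \<Rightarrow> 'v \<times> 'v" where "rev_edge e = (snd e, fst e)"

fun comb_path_from :: "('v \<times> 'v) set \<Rightarrow> 'v \<Rightarrow> ('v \<times> 'v) list \<Rightarrow> 'v \<Rightarrow> bool" where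
  "comb_path_from E u [] v \<longleftrightarrow> u = v"
| "comb_path_from E u (e # es) v \<longleftrightarrow> e \<in> E \<and> iota e = u \<and> comb_path_from E (tau e) es v"

definition tree_edges :: "'v set set \<Rightarrow> ('v \<times> 'v) set" where
  "tree_edges T = {(u, v). u \<noteq> v \<and> {u, v} \<in> T}"

definition simple_path :: "'v \<Rightarrow> ('v \<times> 'v) list \<Rightarrow> bool" where
  "simple_path u es \<longleftrightarrow> distinct (u # map tau es)"

definition spanning_tree :: "'v set set \<Rightarrow> 'v set set \<Rightarrow> bool" where
  "spanning_tree \<Delta> T \<longleftrightarrow> T \<subseteq> {\<sigma>\<in>\<Delta>. card \<sigma> = 2} \<and>
     (\<forall>u\<in>vertices \<Delta>. \<forall>v\<in>vertices \<Delta>.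
        \<exists>!es. comb_path_from (tree_edges T) u es v \<and> simple_path u es)"

definition tree_geodesic :: "'v set set \<Rightarrow> 'v \<Rightarrow> 'v \<Rightarrow> ('v \<times> 'v) list" where
  "tree_geodesic T u v = (THE es. comb_path_from (tree_edges T) u es v \<and>
      (\<forall>es'. comb_path_from (tree_edges T) u es' v \<longrightarrow> length es \<le> length es'))"

text \<open>A letter is a generator together with a sign (True = positive, False = inverse).\<close>
type_synonym 'v letter = "('v \<times> 'v) \<times> bool"
type_synonym 'v word = "'v letter list"

definition inv_word :: "'v word \<Rightarrow> 'v word" where
  "inv_word w = rev (map (\<lambda>(a, b). (a, \<not> b)) w)"

inductive free_red1 :: "'v word \<Rightarrow> 'v word \<Rightarrow> bool" where
  "free_red1 (xs @ [(a, b), (a, \<not> b)] @ ys) (xs @ ys)"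

definition freely_equal :: "'v word \<Rightarrow> 'v word \<Rightarrow> bool" where
  "freely_equal = equivclp free_red1"

definition word_over :: "('v \<times> 'v) set \<Rightarrow> 'v word \<Rightarrow> bool" where
  "word_over E w \<longleftrightarrow> (\<forall>l\<in>set w. fst l \<in> E)"

definition letter_pow :: "'v \<times> 'v \<Rightarrow> int \<Rightarrow> 'v word" where
  "letter_pow e k = replicate (nat \<bar>k\<bar>) (e, k \<ge> 0)"

definition word_of_path :: "('v \<times> 'v) list \<Rightarrow> 'v word" where
  "word_of_path es = map (\<lambda>e. (e, True)) es"

definition relators_H :: "'v set set \<Rightarrow> 'v word set" where
  "relators_H \<Delta> =
     {[(e, True), (rev_edge e, True)] | e. e \<in> Edge \<Delta>} \<union>
     {[(e, True), (f, True), (g, True)] | e f g.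
        e \<in> Edge \<Delta> \<and> f \<in> Edge \<Delta> \<and> g \<in> Edge \<Delta> \<and> tau e = iota f \<and> tau f = iota g \<and> tau g = iota e} \<union>
     {[(e, False), (f, False), (g, False)] | e f g.
        e \<in> Edge \<Delta> \<and> f \<in> Edge \<Delta> \<and> g \<in> Edge \<Delta> \<and> tau e = iota f \<and> tau f = iota g \<and> tau g = iota e}"

definition Area_H :: "'v set set \<Rightarrow> 'v word \<Rightarrow> nat" where
  "Area_H \<Delta> w = (LEAST m. \<exists>xs rs. length xs = m \<and> length rs = m \<and>
      (\<forall>x\<in>set xs. word_over (Edge \<Delta>) x) \<and>
      (\<forall>r\<in>set rs. r \<in> relators_H \<Delta> \<or> inv_word r \<in> relators_H \<Delta>) \<and>
      freely_equal w (concat (map (\<lambda>(x, r). x @ r @ inv_word x) (zip xs rs))))"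

definition p_n :: "'v set set \<Rightarrow> int \<Rightarrow> 'v \<Rightarrow> 'v \<Rightarrow> 'v word" where
  "p_n T n u v = concat (map (\<lambda>e. letter_pow e n) (tree_geodesic T u v))"

end

theory Submission
  imports Defs
begin



abbreviation fe :: "'v word \<Rightarrow> 'v word \<Rightarrow> bool" where "fe \<equiv> freely_equal"

lemma fe_refl[simp]: "fe w w" by (simp add: freely_equal_def)
lemma fe_sym: "fe u w \<Longrightarrow> fe w u" unfolding freely_equal_def by (rule equivclp_sym)
lemma fe_trans[trans]: "fe u w \<Longrightarrow> fe w v \<Longrightarrow> fe u v" unfolding freely_equal_def by (rule equivclp_trans)

lemma fe_ctx: assumes "fe u w" shows "fe (a @ u @ b) (a @ w @ b)"
  using assms unfolding freely_equal_def
proof (induction rule: equivclp_induct)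
  case base then show ?case by simp
next
  case (step y z)
  have "free_red1 (a @ y @ b) (a @ z @ b) \<or> free_red1 (a @ z @ b) (a @ y @ b)"
    using step(2)
  proof
    assume "free_red1 y z" then show ?thesis
      by (cases rule: free_red1.cases) (metis append.assoc free_red1.intros)
  next
    assume "free_red1 z y" then show ?thesis
      by (cases rule: free_red1.cases) (metis append.assoc free_red1.intros)
  qed
  then show ?case using step(3) by (meson equivclp_into_equivclp)
qed

lemma fe_app: "fe u u' \<Longrightarrow> fe v v' \<Longrightarrow> fe (u @ v) (u' @ v')"
  by (metis append.left_neutral append.right_neutral fe_ctx fe_trans)

lemma fe_cancel1: "fe (a @ [(x, b), (x, \<not> b)] @ c) (a @ c)"
  unfolding freely_equal_def by (rule r_into_equivclp) (rule free_red1.intros)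

definition il :: "'v letter \<Rightarrow> 'v letter" where "il l = (fst l, \<not> snd l)"

lemma inv_word_simps[simp]: "inv_word [] = []" "inv_word (l # w) = inv_word w @ [il l]"
  "inv_word (u @ w) = inv_word w @ inv_word u"
  by (auto simp: inv_word_def il_def split: prod.splits)

lemma il_il[simp]: "il (il l) = l" by (simp add: il_def)
lemma inv_inv[simp]: "inv_word (inv_word w) = w" by (induct w) auto
lemma inv_replicate[simp]: "inv_word (replicate k l) = replicate k (il l)"
  by (induct k) (auto simp: replicate_append_same)

lemma fe_cancel_letter: "fe (a @ [l, il l] @ c) (a @ c)"
  using fe_cancel1[of a "fst l" "snd l" c] by (simp add: il_def)

lemma fe_cancel: "fe (a @ w @ inv_word w @ c) (a @ c)"
proof (induction w arbitrary: a c)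
  case Nil then show ?case by simp
next
  case (Cons l w)
  have "fe (a @ (l # w) @ inv_word (l # w) @ c) ((a @ [l]) @ w @ inv_word w @ ([il l] @ c))" by simp
  also have "fe \<dots> ((a @ [l]) @ [il l] @ c)" by (rule Cons.IH)
  also have "fe \<dots> (a @ c)" using fe_cancel_letter[of a l c] by simp
  finally show ?case .
qed

lemma fe_cancel': "fe (a @ inv_word w @ w @ c) (a @ c)"
  using fe_cancel[of a "inv_word w" c] by simp

lemma free_red1_inv: "free_red1 (p @ (a, b) # (a, \<not> b) # r) (p @ r)"
  using free_red1.intros[of p a b r] by simp

lemma fe_inv: assumes "fe u w" shows "fe (inv_word u) (inv_word w)"
  using assms unfolding freely_equal_def
proof (induction rule: equivclp_induct)
  case base then show ?case by simp
next
  case (step y z)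
  have "free_red1 (inv_word y) (inv_word z) \<or> free_red1 (inv_word z) (inv_word y)"
    using step(2)
  proof
    assume "free_red1 y z" then show ?thesis
      by (cases rule: free_red1.cases) (simp add: il_def free_red1_inv)
  next
    assume "free_red1 z y" then show ?thesis
      by (cases rule: free_red1.cases) (simp add: il_def free_red1_inv)
  qed
  then show ?case using step(3) by (meson equivclp_into_equivclp)
qed




definition RH :: "'v set set \<Rightarrow> 'v word \<Rightarrow> bool" where
  "RH \<Delta> r \<longleftrightarrow> r \<in> relators_H \<Delta> \<or> inv_word r \<in> relators_H \<Delta>"

definition prodw :: "'v word list \<Rightarrow> 'v word list \<Rightarrow> 'v word" where
  "prodw xs rs = concat (map (\<lambda>(x, r). x @ r @ inv_word x) (zip xs rs))"

definition fills :: "'v set set \<Rightarrow> 'v word \<Rightarrow> nat \<Rightarrow> bool" where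
  "fills \<Delta> w k \<longleftrightarrow> (\<exists>xs rs. length xs = length rs \<and> length xs \<le> k \<and>
     (\<forall>x\<in>set xs. word_over (Edge \<Delta>) x) \<and> (\<forall>r\<in>set rs. RH \<Delta> r) \<and> fe w (prodw xs rs))"

lemma Area_le: assumes "fills \<Delta> w k" shows "Area_H \<Delta> w \<le> k"
proof -
  obtain xs rs where h: "length xs = length rs" "length xs \<le> k"
     "\<forall>x\<in>set xs. word_over (Edge \<Delta>) x" "\<forall>r\<in>set rs. RH \<Delta> r" "fe w (prodw xs rs)"
    using assms unfolding fills_def by blast
  have "Area_H \<Delta> w \<le> length xs" unfolding Area_H_def
    by (rule Least_le) (use h in \<open>auto simp: RH_def prodw_def\<close>)
  then show ?thesis using h by simp
qed

lemma fills_nil: "fills \<Delta> [] k"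
  unfolding fills_def by (rule exI[of _ "[]"], rule exI[of _ "[]"]) (simp add: prodw_def)

lemma fills_mono: "fills \<Delta> w k \<Longrightarrow> k \<le> k' \<Longrightarrow> fills \<Delta> w k'"
  unfolding fills_def using order_trans by blast

lemma fills_fe: assumes "fe u w" "fills \<Delta> w k" shows "fills \<Delta> u k"
proof -
  obtain xs rs where h: "length xs = length rs" "length xs \<le> k"
     "\<forall>x\<in>set xs. word_over (Edge \<Delta>) x" "\<forall>r\<in>set rs. RH \<Delta> r" "fe w (prodw xs rs)"
    using assms(2) unfolding fills_def by blast
  have "fe u (prodw xs rs)" using fe_trans[OF assms(1) h(5)] .
  then show ?thesis unfolding fills_def using h by blast
qed

lemma prodw_append: "length xs = length rs \<Longrightarrow> prodw (xs @ xs') (rs @ rs') = prodw xs rs @ prodw xs' rs'"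
  by (simp add: prodw_def)

lemma fills_app: assumes "fills \<Delta> u a" "fills \<Delta> v b" shows "fills \<Delta> (u @ v) (a + b)"
proof -
  obtain xs rs where h: "length xs = length rs" "length xs \<le> a"
     "\<forall>x\<in>set xs. word_over (Edge \<Delta>) x" "\<forall>r\<in>set rs. RH \<Delta> r" "fe u (prodw xs rs)"
    using assms(1) unfolding fills_def by blast
  obtain xs' rs' where h': "length xs' = length rs'" "length xs' \<le> b"
     "\<forall>x\<in>set xs'. word_over (Edge \<Delta>) x" "\<forall>r\<in>set rs'. RH \<Delta> r" "fe v (prodw xs' rs')"
    using assms(2) unfolding fills_def by blast
  show ?thesis unfolding fills_def
    apply (rule exI[of _ "xs @ xs'"], rule exI[of _ "rs @ rs'"])
    using h h' fe_app[OF h(5) h'(5)] by (simp add: prodw_append) blast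
qed

lemma word_over_app[simp]: "word_over E (u @ w) \<longleftrightarrow> word_over E u \<and> word_over E w"
  by (auto simp: word_over_def)
lemma word_over_inv[simp]: "word_over E (inv_word w) \<longleftrightarrow> word_over E w"
  by (auto simp: word_over_def inv_word_def)

lemma prodw_conj: "length xs = length rs \<Longrightarrow>
   fe (x @ prodw xs rs @ inv_word x) (prodw (map (\<lambda>y. x @ y) xs) rs)"
proof (induction xs rs rule: list_induct2)
  case Nil then show ?case by (simp add: prodw_def fe_cancel[of "[]" x "[]", simplified])
next
  case (Cons y xs r rs)
  have "x @ prodw (y # xs) (r # rs) @ inv_word x = (x @ y @ r @ inv_word y) @ prodw xs rs @ inv_word x"
    by (simp add: prodw_def)
  also have "fe \<dots> ((x @ y @ r @ inv_word y) @ inv_word x @ x @ prodw xs rs @ inv_word x)"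
    using fe_cancel'[of "x @ y @ r @ inv_word y" x "prodw xs rs @ inv_word x"] by (simp add: fe_sym)
  also have "fe \<dots> ((x @ y @ r @ inv_word y @ inv_word x) @ prodw (map (\<lambda>y. x @ y) xs) rs)"
    using fe_ctx[OF Cons.IH, of "x @ y @ r @ inv_word y @ inv_word x" "[]"] by simp
  also have "(x @ y @ r @ inv_word y @ inv_word x) @ prodw (map (\<lambda>y. x @ y) xs) rs
     = prodw (map (\<lambda>y. x @ y) (y # xs)) (r # rs)"
    unfolding prodw_def by simp
  finally show ?case .
qed

lemma fills_conj: assumes "fills \<Delta> w k" "word_over (Edge \<Delta>) x" shows "fills \<Delta> (x @ w @ inv_word x) k"
proof -
  obtain xs rs where h: "length xs = length rs" "length xs \<le> k"
     "\<forall>x\<in>set xs. word_over (Edge \<Delta>) x" "\<forall>r\<in>set rs. RH \<Delta> r" "fe w (prodw xs rs)"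
    using assms(1) unfolding fills_def by blast
  show ?thesis unfolding fills_def
    apply (rule exI[of _ "map (\<lambda>y. x @ y) xs"], rule exI[of _ rs])
    using h assms(2) fe_trans[OF fe_ctx[OF h(5), of x "inv_word x"] prodw_conj[OF h(1), of x]]
    by auto
qed

lemma RH_inv: "RH \<Delta> r \<Longrightarrow> RH \<Delta> (inv_word r)" by (auto simp: RH_def)

lemma inv_concat: "inv_word (concat ws) = concat (rev (map inv_word ws))"
  by (induct ws) auto

lemma inv_prodw: "length xs = length rs \<Longrightarrow> inv_word (prodw xs rs) = prodw (rev xs) (rev (map inv_word rs))"
  by (induction xs rs rule: list_induct2) (auto simp: prodw_def prodw_append)

lemma fills_inv: assumes "fills \<Delta> w k" shows "fills \<Delta> (inv_word w) k"
proof -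
  obtain xs rs where h: "length xs = length rs" "length xs \<le> k"
     "\<forall>x\<in>set xs. word_over (Edge \<Delta>) x" "\<forall>r\<in>set rs. RH \<Delta> r" "fe w (prodw xs rs)"
    using assms(1) unfolding fills_def by blast
  show ?thesis unfolding fills_def
    apply (rule exI[of _ "rev xs"], rule exI[of _ "rev (map inv_word rs)"])
    using h fe_inv[OF h(5)] by (auto simp: inv_prodw RH_inv)
qed

lemma fills_rel: "RH \<Delta> r \<Longrightarrow> fills \<Delta> r 1"
  unfolding fills_def
  by (rule exI[of _ "[[]]"], rule exI[of _ "[r]"]) (simp add: prodw_def word_over_def)

definition eqa :: "'v set set \<Rightarrow> nat \<Rightarrow> 'v word \<Rightarrow> 'v word \<Rightarrow> bool" where
  "eqa \<Delta> k u w \<longleftrightarrow> fills \<Delta> (u @ inv_word w) k"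

lemma eqa_refl: "eqa \<Delta> k u u"
  unfolding eqa_def by (rule fills_fe[OF _ fills_nil]) (use fe_cancel[of "[]" u "[]"] in simp)

lemma eqa_sym: "eqa \<Delta> k u w \<Longrightarrow> eqa \<Delta> k w u"
  unfolding eqa_def by (drule fills_inv) simp

lemma eqa_trans: assumes "eqa \<Delta> a u w" "eqa \<Delta> b w v" shows "eqa \<Delta> (a + b) u v"
proof -
  have "fills \<Delta> ((u @ inv_word w) @ (w @ inv_word v)) (a + b)"
    using assms unfolding eqa_def by (rule fills_app)
  moreover have "fe (u @ inv_word v) ((u @ inv_word w) @ (w @ inv_word v))"
    using fe_cancel'[of u w "inv_word v"] by (simp add: fe_sym)
  ultimately show ?thesis unfolding eqa_def by (rule fills_fe[rotated])
qed

lemma eqa_mono: "eqa \<Delta> k u w \<Longrightarrow> k \<le> k' \<Longrightarrow> eqa \<Delta> k' u w"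
  unfolding eqa_def by (rule fills_mono)

lemma eqa_ctx: assumes "eqa \<Delta> k u w" "word_over (Edge \<Delta>) x" shows "eqa \<Delta> k (x @ u @ y) (x @ w @ y)"
proof -
  have "fills \<Delta> (x @ (u @ inv_word w) @ inv_word x) k"
    using assms unfolding eqa_def by (rule fills_conj)
  moreover have "fe ((x @ u @ y) @ inv_word (x @ w @ y)) (x @ (u @ inv_word w) @ inv_word x)"
    using fe_cancel[of "x @ u" y "inv_word w @ inv_word x"] by simp
  ultimately show ?thesis unfolding eqa_def by (rule fills_fe[rotated])
qed

lemma eqa_fe: "fe u w \<Longrightarrow> eqa \<Delta> 0 u w"
proof -
  assume "fe u w"
  then have "fe (u @ inv_word w) (w @ inv_word w)" by (rule fe_app[OF _ fe_refl])
  also have "fe \<dots> []" using fe_cancel[of "[]" w "[]"] by simp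
  finally show ?thesis unfolding eqa_def by (rule fills_fe[OF _ fills_nil])
qed

lemma eqa_fills: "eqa \<Delta> k w [] \<Longrightarrow> fills \<Delta> w k" by (simp add: eqa_def)




lemma rev_edge_Edge: "e \<in> Edge \<Delta> \<Longrightarrow> rev_edge e \<in> Edge \<Delta>"
  by (auto simp: Edge_def rev_edge_def insert_commute)

lemma rev_rev_edge[simp]: "rev_edge (rev_edge e) = e" by (simp add: rev_edge_def)

lemma RH_pair: assumes "e \<in> Edge \<Delta>" shows "RH \<Delta> [(e, b), (rev_edge e, b)]"
proof (cases b)
  case True
  have "[(e, True), (rev_edge e, True)] \<in> relators_H \<Delta>"
    unfolding relators_H_def using assms by blast
  then show ?thesis using True by (simp add: RH_def)
next
  case False
  have "inv_word [(e, b), (rev_edge e, b)] = [(rev_edge e, True), (rev_edge (rev_edge e), True)]"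
    using False by (simp add: il_def)
  moreover have "[(rev_edge e, True), (rev_edge (rev_edge e), True)] \<in> relators_H \<Delta>"
    unfolding relators_H_def using rev_edge_Edge[OF assms] by blast
  ultimately show ?thesis unfolding RH_def by simp
qed

definition cyc :: "'v set set \<Rightarrow> 'v \<times> 'v \<Rightarrow> 'v \<times> 'v \<Rightarrow> 'v \<times> 'v \<Rightarrow> bool" where
  "cyc \<Delta> e f g \<longleftrightarrow> e \<in> Edge \<Delta> \<and> f \<in> Edge \<Delta> \<and> g \<in> Edge \<Delta> \<and> tau e = iota f \<and> tau f = iota g \<and> tau g = iota e"

lemma RH_tri: assumes "cyc \<Delta> e f g" shows "RH \<Delta> [(e, b), (f, b), (g, b)]"
proof (cases b)
  case True
  have "[(e, True), (f, True), (g, True)] \<in> relators_H \<Delta>"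
    unfolding relators_H_def using assms[unfolded cyc_def] by blast
  then show ?thesis using True by (simp add: RH_def)
next
  case False
  have "[(e, False), (f, False), (g, False)] \<in> relators_H \<Delta>"
    unfolding relators_H_def using assms[unfolded cyc_def] by blast
  then show ?thesis using False by (simp add: RH_def)
qed

lemma cyc_rot: "cyc \<Delta> e f g \<Longrightarrow> cyc \<Delta> g e f" by (auto simp: cyc_def)

lemma word_over_replicate[simp]: "word_over E (replicate k l) \<longleftrightarrow> k = 0 \<or> fst l \<in> E"
  by (auto simp: word_over_def)

lemma word_over_Cons[simp]: "word_over E (l # w) \<longleftrightarrow> fst l \<in> E \<and> word_over E w"
  by (auto simp: word_over_def)

lemma word_over_Nil[simp]: "word_over E []" by (simp add: word_over_def)

lemma fst_il[simp]: "fst (il l) = fst l" by (simp add: il_def)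

lemma fills_pair_pow: assumes "fills \<Delta> [x, y] 1" "fst x \<in> Edge \<Delta>"
  shows "fills \<Delta> (replicate k x @ replicate k y) k"
proof (induction k)
  case 0 then show ?case by (simp add: fills_nil)
next
  case (Suc k)
  let ?W = "replicate k x @ replicate k y"
  have "fills \<Delta> (([x] @ ?W @ inv_word [x]) @ [x, y]) (k + 1)"
    by (rule fills_app[OF fills_conj[OF Suc] assms(1)]) (use assms in simp)
  moreover have "fe (replicate (Suc k) x @ replicate (Suc k) y) (([x] @ ?W @ inv_word [x]) @ [x, y])"
  proof -
    have eq: "replicate (Suc k) x @ replicate (Suc k) y = [x] @ ?W @ [y]"
      by (simp add: replicate_append_same)
    have f: "fe ([x] @ ?W @ inv_word [x] @ [x, y]) ([x] @ ?W @ [y])"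
      using fe_cancel'[of "[x] @ ?W" "[x]" "[y]"] by simp
    show ?thesis unfolding eq using fe_sym[OF f] by simp
  qed
  ultimately show ?case by (simp add: fills_fe)
qed

lemma fills_edge_pow: assumes "e \<in> Edge \<Delta>"
  shows "fills \<Delta> (replicate k (e, b) @ replicate k (rev_edge e, b)) k"
  by (rule fills_pair_pow) (use assms RH_pair[OF assms, of b] fills_rel in auto)

lemma fe_cancI: "u = a @ w @ inv_word w @ c \<Longrightarrow> v = a @ c \<Longrightarrow> fe u v"
  using fe_cancel by blast

lemma fills_feI: "fills \<Delta> w k \<Longrightarrow> fe u w \<Longrightarrow> fills \<Delta> u k"
  by (rule fills_fe)

declare replicate_app_Cons_same[simp]

lemma comm_pow:
  assumes C: "fills \<Delta> [x, y, il x, il y] 2" and ex: "fst x \<in> Edge \<Delta>" and ey: "fst y \<in> Edge \<Delta>"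
  shows "fills \<Delta> (x # replicate k y @ il x # replicate k (il y)) (2 * k)"
proof (induction k)
  case 0
  have "fe [x, il x] []" by (rule fe_cancI[of _ "[]" "[x]" "[]"]) simp_all
  then have "fills \<Delta> [x, il x] 0" by (rule fills_fe[OF _ fills_nil])
  then show ?case by simp
next
  case (Suc k)
  define Y where "Y = replicate k y"
  define Yb where "Yb = replicate k (il y)"
  have iY: "inv_word Yb = Y" "inv_word Y = Yb" by (simp_all add: Y_def Yb_def)
  have wY: "word_over (Edge \<Delta>) Y" using ey by (simp add: Y_def)
  define P where "P = x # Y"
  define E where "E = [y, il x, il y, x]"
  have fE: "fills \<Delta> ([il x] @ [x, y, il x, il y] @ inv_word [il x]) 2"
    by (rule fills_conj[OF C]) (simp add: ex)
  have "fe E ([il x] @ [x, y, il x, il y] @ inv_word [il x])"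
    by (rule fe_sym, rule fe_cancI[of _ "[]" "[il x]" "[y, il x, il y, x]"]) (simp_all add: E_def)
  then have fE': "fills \<Delta> E 2" using fE fills_fe by blast
  have fPE: "fills \<Delta> (P @ E @ inv_word P) 2"
    by (rule fills_conj[OF fE']) (simp add: P_def ex wY)
  have IH: "fills \<Delta> (x # Y @ il x # Yb) (2 * k)" using Suc by (simp add: Y_def Yb_def)
  have F: "fills \<Delta> ((P @ E @ inv_word P) @ (x # Y @ il x # Yb)) (2 + 2 * k)"
    by (rule fills_app[OF fPE IH])
  have "fe ((P @ E @ inv_word P) @ (x # Y @ il x # Yb)) (x # Y @ [y,il x,il y,x] @ Yb @ Y @ il x # Yb)"
    by (rule fe_cancI[of _ "x # Y @ [y,il x,il y,x] @ Yb" "[il x]" "Y @ il x # Yb"])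
       (simp_all add: P_def E_def iY)
  also have "fe \<dots> (x # Y @ [y, il x, il y, x, il x] @ Yb)"
    by (rule fe_cancI[of _ "x # Y @ [y,il x,il y,x]" "Yb" "il x # Yb"]) (simp_all add: iY)
  also have "fe \<dots> (x # Y @ [y, il x, il y] @ Yb)"
    by (rule fe_cancI[of _ "x # Y @ [y,il x,il y]" "[x]" "Yb"]) simp_all
  finally have "fe (x # replicate (Suc k) y @ il x # replicate (Suc k) (il y)) ((P @ E @ inv_word P) @ (x # Y @ il x # Yb))"
    by (rule fe_sym[THEN fe_trans[rotated]]) (simp add: Y_def Yb_def replicate_append_same)
  then show ?case using F by (simp add: fills_fe)
qed

lemma tri_pow:
  assumes R: "fills \<Delta> [x, y, z] 1" and C: "fills \<Delta> [x, y, il x, il y] 2"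
    and ex: "fst x \<in> Edge \<Delta>" and ey: "fst y \<in> Edge \<Delta>"
  shows "fills \<Delta> (replicate k x @ replicate k y @ replicate k z) (k * k)"
proof (induction k)
  case 0 then show ?case by (simp add: fills_nil)
next
  case (Suc k)
  define X where "X = replicate k x"
  define Xb where "Xb = replicate k (il x)"
  define Y where "Y = replicate k y"
  define Yb where "Yb = replicate k (il y)"
  define Z where "Z = replicate k z"
  have iY: "inv_word Yb = Y" "inv_word Y = Yb" "inv_word Xb = X" "inv_word X = Xb"
    by (simp_all add: Y_def Yb_def X_def Xb_def)
  have wX: "word_over (Edge \<Delta>) X" "word_over (Edge \<Delta>) Y" using ex ey by (simp_all add: X_def Y_def)
  define D where "D = x # Y @ il x # Yb"
  have fD: "fills \<Delta> D (2 * k)" unfolding D_def Y_def Yb_def by (rule comm_pow[OF C ex ey])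
  have f1: "fills \<Delta> (X @ D @ inv_word X) (2 * k)" by (rule fills_conj[OF fD wX(1)])
  have f2: "fills \<Delta> ((X @ Y) @ [x, y, z] @ inv_word (X @ Y)) 1" by (rule fills_conj[OF R]) (simp add: wX)
  have IH: "fills \<Delta> (X @ Y @ Z) (k * k)" using Suc by (simp add: X_def Y_def Z_def)
  have F: "fills \<Delta> ((X @ D @ inv_word X) @ ((X @ Y) @ [x, y, z] @ inv_word (X @ Y)) @ (X @ Y @ Z)) (2 * k + (1 + k * k))"
    by (rule fills_app[OF f1 fills_app[OF f2 IH]])
  have "fe ((X @ D @ inv_word X) @ ((X @ Y) @ [x, y, z] @ inv_word (X @ Y)) @ (X @ Y @ Z))
           (X @ D @ Xb @ X @ Y @ [x,y,z] @ Yb @ Y @ Z)"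
    by (rule fe_cancI[of _ "X @ D @ Xb @ X @ Y @ [x,y,z] @ Yb" Xb "Y @ Z"]) (simp_all add: iY)
  also have "fe \<dots> (X @ D @ Xb @ X @ Y @ [x,y,z] @ Z)"
    by (rule fe_cancI[of _ "X @ D @ Xb @ X @ Y @ [x,y,z]" Yb "Z"]) (simp_all add: iY)
  also have "fe \<dots> (X @ D @ Y @ [x,y,z] @ Z)"
    by (rule fe_cancI[of _ "X @ D" Xb "Y @ [x,y,z] @ Z"]) (simp_all add: iY)
  also have "fe \<dots> (X @ x # Y @ [il x, x, y, z] @ Z)"
    by (rule fe_cancI[of _ "X @ x # Y @ [il x]" Yb "[x,y,z] @ Z"]) (simp_all add: iY D_def)
  also have "fe \<dots> (X @ x # Y @ [y, z] @ Z)"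
    by (rule fe_cancI[of _ "X @ x # Y" "[il x]" "[y,z] @ Z"]) simp_all
  finally have "fe (replicate (Suc k) x @ replicate (Suc k) y @ replicate (Suc k) z)
     ((X @ D @ inv_word X) @ ((X @ Y) @ [x, y, z] @ inv_word (X @ Y)) @ (X @ Y @ Z))"
    by (rule fe_sym[THEN fe_trans[rotated]]) (simp add: X_def Y_def Z_def)
  then have "fills \<Delta> (replicate (Suc k) x @ replicate (Suc k) y @ replicate (Suc k) z) (2 * k + (1 + k * k))"
    using F by (simp add: fills_fe)
  then show ?case by (rule fills_mono) simp
qed




fun wn :: "'v set set \<Rightarrow> int \<Rightarrow> 'v list \<Rightarrow> 'v word" where
  "wn \<Delta> n (a # b # xs) = (if (a, b) \<in> Edge \<Delta> then letter_pow (a, b) n else []) @ wn \<Delta> n (b # xs)"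
| "wn \<Delta> n _ = []"

lemma wn_over: "word_over (Edge \<Delta>) (wn \<Delta> n xs)"
  by (induction \<Delta> n xs rule: wn.induct) (auto simp: letter_pow_def word_over_def)

lemma wn_split: "wn \<Delta> n (xs @ y # ys) = wn \<Delta> n (xs @ [y]) @ wn \<Delta> n (y # ys)"
proof (induction xs)
  case Nil then show ?case by simp
next
  case (Cons a xs) then show ?case by (cases xs) auto
qed

lemma wn_decomp: assumes "xs \<noteq> []"
  shows "wn \<Delta> n (p @ xs @ s) = wn \<Delta> n (p @ [hd xs]) @ wn \<Delta> n xs @ wn \<Delta> n (last xs # s)"
proof -
  obtain a xs' where xs: "xs = a # xs'" using assms by (cases xs) auto
  have e1: "wn \<Delta> n (p @ xs @ s) = wn \<Delta> n (p @ [a]) @ wn \<Delta> n (a # xs' @ s)"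
    using wn_split[of \<Delta> n p a "xs' @ s"] by (simp add: xs)
  obtain bl l where bl: "xs = bl @ [l]" using assms by (metis rev_exhaust)
  have "a # xs' @ s = bl @ l # s" using xs bl by (metis append.assoc append_Cons append_Nil)
  then have "wn \<Delta> n (a # xs' @ s) = wn \<Delta> n (bl @ l # s)" by (rule arg_cong)
  also have "\<dots> = wn \<Delta> n xs @ wn \<Delta> n (l # s)" using wn_split[of \<Delta> n bl l s] bl by simp
  finally have e2: "wn \<Delta> n (a # xs' @ s) = wn \<Delta> n xs @ wn \<Delta> n (l # s)" .
  have hl: "hd xs = a" "last xs = l" using xs apply simp using bl by simp
  show ?thesis unfolding hl by (simp only: e1 e2)
qed

definition weq :: "'v set set \<Rightarrow> nat \<Rightarrow> 'v list \<Rightarrow> 'v list \<Rightarrow> bool" where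
  "weq \<Delta> K xs ys \<longleftrightarrow> (\<forall>n. eqa \<Delta> (K * (nat \<bar>n\<bar>)^2) (wn \<Delta> n xs) (wn \<Delta> n ys))"

lemma weq_refl: "weq \<Delta> K xs xs" by (simp add: weq_def eqa_refl)
lemma weq_sym: "weq \<Delta> K xs ys \<Longrightarrow> weq \<Delta> K ys xs" by (simp add: weq_def eqa_sym)
lemma weq_trans: "weq \<Delta> K xs ys \<Longrightarrow> weq \<Delta> K' ys zs \<Longrightarrow> weq \<Delta> (K + K') xs zs"
  unfolding weq_def by (metis eqa_trans add_mult_distrib)
lemma weq_mono: "weq \<Delta> K xs ys \<Longrightarrow> K \<le> K' \<Longrightarrow> weq \<Delta> K' xs ys"
  unfolding weq_def by (meson eqa_mono mult_le_mono1)
lemma weq_eq: "(\<And>n. wn \<Delta> n xs = wn \<Delta> n ys) \<Longrightarrow> weq \<Delta> K xs ys"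
  by (simp add: weq_def eqa_refl)

lemma weq_ctx: assumes "weq \<Delta> K xs ys" "xs \<noteq> []" "ys \<noteq> []" "hd xs = hd ys" "last xs = last ys"
  shows "weq \<Delta> K (p @ xs @ s) (p @ ys @ s)"
  unfolding weq_def
proof
  fix n
  show "eqa \<Delta> (K * (nat \<bar>n\<bar>)^2) (wn \<Delta> n (p @ xs @ s)) (wn \<Delta> n (p @ ys @ s))"
    using eqa_ctx[OF assms(1)[unfolded weq_def, rule_format, of n] wn_over[of \<Delta> n "p @ [hd xs]"], of "wn \<Delta> n (last xs # s)"]
    by (simp add: wn_decomp assms)
qed

lemma sc_sub: "simplicial_complex \<Delta> \<Longrightarrow> \<sigma> \<in> \<Delta> \<Longrightarrow> \<tau> \<subseteq> \<sigma> \<Longrightarrow> \<tau> \<noteq> {} \<Longrightarrow> \<tau> \<in> \<Delta>"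
  by (auto simp: simplicial_complex_def)

lemma Edge_iff: "(u, v) \<in> Edge \<Delta> \<longleftrightarrow> u \<noteq> v \<and> {u, v} \<in> \<Delta>" by (simp add: Edge_def)

lemma weq_triple: assumes sc: "simplicial_complex \<Delta>" and S: "{a, b, c} \<in> \<Delta>"
  shows "weq \<Delta> 2 [a, b, c] [a, c]"
proof (cases "a = b \<or> b = c")
  case True then show ?thesis by (intro weq_eq) (auto simp: Edge_iff)
next
  case False
  then have ab: "a \<noteq> b" "b \<noteq> c" by auto
  have Eab: "(a, b) \<in> Edge \<Delta>" using ab sc_sub[OF sc S, of "{a,b}"] by (auto simp: Edge_iff)
  have Ebc: "(b, c) \<in> Edge \<Delta>" using ab sc_sub[OF sc S, of "{b,c}"] by (auto simp: Edge_iff)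
  show ?thesis unfolding weq_def
  proof
    fix n :: int
    define k where "k = nat \<bar>n\<bar>"
    define \<beta> where "\<beta> = (0 \<le> n)"
    have kk: "k \<le> 2 * k^2" "k * k + k \<le> 2 * k^2" by (simp_all add: power2_eq_square le_square)
    have lp: "letter_pow e n = replicate k (e, \<beta>)" for e by (simp add: letter_pow_def k_def \<beta>_def)
    show "eqa \<Delta> (2 * k^2) (wn \<Delta> n [a, b, c]) (wn \<Delta> n [a, c])"
    proof (cases "a = c")
      case True
      have "fills \<Delta> (replicate k ((a, b), \<beta>) @ replicate k (rev_edge (a, b), \<beta>)) k"
        by (rule fills_edge_pow[OF Eab])
      then show ?thesis using True Eab kk
        by (auto simp: eqa_def lp rev_edge_def Edge_iff insert_commute intro: fills_mono)
    next
      case False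
      have Eca: "(c, a) \<in> Edge \<Delta>" using False sc_sub[OF sc S, of "{c,a}"] by (auto simp: Edge_iff)
      have Eac: "(a, c) \<in> Edge \<Delta>" using False sc_sub[OF sc S, of "{a,c}"] by (auto simp: Edge_iff)
      have cy: "cyc \<Delta> (a, b) (b, c) (c, a)" using Eab Ebc Eca by (simp add: cyc_def iota_def tau_def)
      define x where "x = ((a, b), \<beta>)"
      define y where "y = ((b, c), \<beta>)"
      define z where "z = ((c, a), \<beta>)"
      have R: "fills \<Delta> [x, y, z] 1" unfolding x_def y_def z_def by (rule fills_rel[OF RH_tri[OF cy]])
      have R2: "fills \<Delta> [il z, il x, il y] 1"
        unfolding x_def y_def z_def il_def using fills_rel[OF RH_tri[OF cyc_rot[OF cy]]] by simp
      have "fe [x, y, il x, il y] ([x, y, z] @ [il z, il x, il y])"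
        by (rule fe_sym, rule fe_cancI[of _ "[x,y]" "[z]" "[il x, il y]"]) simp_all
      from fills_fe[OF this fills_app[OF R R2]] have C: "fills \<Delta> [x, y, il x, il y] 2" by (simp add: numeral_2_eq_2)
      have T: "fills \<Delta> (replicate k x @ replicate k y @ replicate k z) (k * k)"
        by (rule tri_pow[OF R C]) (simp_all add: x_def y_def Eab Ebc)
      have P: "fills \<Delta> (replicate k ((c, a), \<not> \<beta>) @ replicate k (rev_edge (c, a), \<not> \<beta>)) k"
        by (rule fills_edge_pow[OF Eca])
      have F: "fills \<Delta> ((replicate k x @ replicate k y @ replicate k z) @
          (replicate k ((c, a), \<not> \<beta>) @ replicate k ((a, c), \<not> \<beta>))) (k * k + k)"
        using fills_app[OF T P] by (simp add: rev_edge_def)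
      have "fe (replicate k x @ replicate k y @ replicate k ((a, c), \<not> \<beta>))
         ((replicate k x @ replicate k y @ replicate k z) @
          (replicate k ((c, a), \<not> \<beta>) @ replicate k ((a, c), \<not> \<beta>)))"
        by (rule fe_sym, rule fe_cancI[of _ "replicate k x @ replicate k y" "replicate k z" "replicate k ((a, c), \<not> \<beta>)"])
           (simp_all add: z_def il_def)
      note FE = this
      have "fills \<Delta> (replicate k x @ replicate k y @ replicate k ((a, c), \<not> \<beta>)) (2 * k^2)"
        by (rule fills_fe[OF FE fills_mono[OF F kk(2)]])
      then show ?thesis using Eab Ebc Eac
        by (simp add: eqa_def lp x_def y_def il_def)
    qed
  qed
qed

lemma weq_simplex: assumes sc: "simplicial_complex \<Delta>" and "\<sigma> \<in> \<Delta>" "b \<in> \<sigma>"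
  shows "a \<in> \<sigma> \<Longrightarrow> set ws \<subseteq> \<sigma> \<Longrightarrow> weq \<Delta> (2 * length ws) (a # ws @ [b]) [a, b]"
proof (induction ws arbitrary: a)
  case Nil then show ?case by (simp add: weq_refl)
next
  case (Cons w ws)
  have "weq \<Delta> (2 * length ws) ([a] @ (w # ws @ [b]) @ []) ([a] @ [w, b] @ [])"
    by (rule weq_ctx) (use Cons in auto)
  moreover have "weq \<Delta> 2 [a, w, b] [a, b]"
    by (rule weq_triple[OF sc sc_sub[OF sc assms(2)]]) (use Cons assms in auto)
  ultimately show ?case using weq_trans by fastforce
qed




lemma wn_stutter: "wn \<Delta> n (p @ a # a # s) = wn \<Delta> n (p @ a # s)"
  using wn_split[of \<Delta> n p a "a # s"] wn_split[of \<Delta> n p a s] by (simp add: Edge_iff)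

lemma weq_sq:
  assumes sc: "simplicial_complex \<Delta>" and S: "{A, B, C, D} \<in> \<Delta>"
  shows "weq \<Delta> 4 (p @ [D, A, B] @ s) (p @ [D, C, B] @ s)"
proof -
  have 1: "weq \<Delta> 2 [D, A, B] [D, B]" by (rule weq_triple[OF sc sc_sub[OF sc S]]) auto
  have 2: "weq \<Delta> 2 [D, C, B] [D, B]" by (rule weq_triple[OF sc sc_sub[OF sc S]]) auto
  have "weq \<Delta> (2 + 2) [D, A, B] [D, C, B]" by (rule weq_trans[OF 1 weq_sym[OF 2]])
  then show ?thesis by (intro weq_ctx) auto
qed

lemma grid_row:
  fixes V :: "nat \<Rightarrow> nat \<Rightarrow> 'v::finite"
  assumes sc: "simplicial_complex \<Delta>"
    and sq: "\<And>j. j < M \<Longrightarrow> {V i j, V i (Suc j), V (Suc i) j, V (Suc i) (Suc j)} \<in> \<Delta>"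
    and l: "V i 0 = q" "V (Suc i) 0 = q" and r: "V i M = q" "V (Suc i) M = q"
  shows "weq \<Delta> (4 * M) (map (V i) [0..<Suc M]) (map (V (Suc i)) [0..<Suc M])"
proof -
  define X where "X j = map (V (Suc i)) [0..<Suc j] @ map (V i) [j..<Suc M]" for j
  have sw: "j \<le> M \<Longrightarrow> weq \<Delta> (4 * j) (X 0) (X j)" for j
  proof (induction j)
    case 0 then show ?case by (simp add: weq_refl)
  next
    case (Suc j)
    then have jM: "j < M" by simp
    let ?P = "map (V (Suc i)) [0..<j]" and ?S = "map (V i) [Suc (Suc j)..<Suc M]"
    have u1: "[j..<Suc M] = j # Suc j # [Suc (Suc j)..<Suc M]"
      using jM by (simp add: upt_conv_Cons del: upt_Suc)
    have u2: "[Suc j..<Suc M] = Suc j # [Suc (Suc j)..<Suc M]"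
      using jM by (simp add: upt_conv_Cons del: upt_Suc)
    have u0: "[0..<Suc j] = [0..<j] @ [j]" "[0..<Suc (Suc j)] = [0..<j] @ [j, Suc j]" by simp_all
    have e1: "X j = ?P @ [V (Suc i) j, V i j, V i (Suc j)] @ ?S"
      unfolding X_def u0 u1 by simp
    have e2: "X (Suc j) = ?P @ [V (Suc i) j, V (Suc i) (Suc j), V i (Suc j)] @ ?S"
      unfolding X_def u0 u2 by simp
    have "weq \<Delta> 4 (X j) (X (Suc j))" unfolding e1 e2
      by (rule weq_sq[OF sc]) (use sq[OF jM] in \<open>simp add: insert_commute\<close>)
    note st = this
    have "weq \<Delta> (4 * j + 4) (X 0) (X (Suc j))" by (rule weq_trans[OF Suc.IH[OF Suc_leD[OF Suc.prems]] st])
    then show ?case by (simp add: add.commute)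
  qed
  have a: "weq \<Delta> 0 (map (V i) [0..<Suc M]) (X 0)"
  proof (rule weq_eq)
    fix n
    have u: "[0..<Suc M] = 0 # [Suc 0..<Suc M]" by (simp add: upt_conv_Cons del: upt_Suc)
    have "X 0 = [] @ q # q # map (V i) [Suc 0..<Suc M]" using l unfolding X_def u by simp
    moreover have "map (V i) [0..<Suc M] = [] @ q # map (V i) [Suc 0..<Suc M]" using l unfolding u by simp
    ultimately show "wn \<Delta> n (map (V i) [0..<Suc M]) = wn \<Delta> n (X 0)" by (simp only: wn_stutter)
  qed
  have b: "weq \<Delta> 0 (X M) (map (V (Suc i)) [0..<Suc M])"
  proof (rule weq_eq)
    fix n
    have "X M = map (V (Suc i)) [0..<M] @ q # q # []" using r by (simp add: X_def)
    moreover have "map (V (Suc i)) [0..<Suc M] = map (V (Suc i)) [0..<M] @ q # []" using r by simp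
    ultimately show "wn \<Delta> n (X M) = wn \<Delta> n (map (V (Suc i)) [0..<Suc M])" by (simp only: wn_stutter)
  qed
  show ?thesis using weq_trans[OF weq_trans[OF a sw[OF order_refl]] b] by simp
qed

lemma grid:
  fixes V :: "nat \<Rightarrow> nat \<Rightarrow> 'v::finite"
  assumes sc: "simplicial_complex \<Delta>"
    and sq: "\<And>i j. i < M \<Longrightarrow> j < M \<Longrightarrow> {V i j, V i (Suc j), V (Suc i) j, V (Suc i) (Suc j)} \<in> \<Delta>"
    and l: "\<And>i. i \<le> M \<Longrightarrow> V i 0 = q" and r: "\<And>i. i \<le> M \<Longrightarrow> V i M = q"
    and t: "\<And>j. j \<le> M \<Longrightarrow> V M j = q"
  shows "weq \<Delta> (4 * M * M) (map (V 0) [0..<Suc M]) [q]"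
proof -
  have "i \<le> M \<Longrightarrow> weq \<Delta> (4 * M * i) (map (V 0) [0..<Suc M]) (map (V i) [0..<Suc M])" for i
  proof (induction i)
    case 0 then show ?case by (simp add: weq_refl)
  next
    case (Suc i)
    have "weq \<Delta> (4 * M) (map (V i) [0..<Suc M]) (map (V (Suc i)) [0..<Suc M])"
      by (rule grid_row[OF sc, where q = q]) (use Suc.prems sq l r in auto)
    then show ?case using weq_trans[OF Suc.IH] Suc.prems by (simp add: algebra_simps)
  qed
  from this[OF order_refl] have "weq \<Delta> (4 * M * M) (map (V 0) [0..<Suc M]) (map (V M) [0..<Suc M])" .
  moreover have "weq \<Delta> 0 (map (V M) [0..<Suc M]) [q]"
  proof (rule weq_eq)
    fix n
    have "map (V M) [0..<Suc M] = replicate (Suc M) q"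
      by (rule nth_equalityI) (use t in \<open>auto simp del: upt_Suc replicate_Suc\<close>)
    moreover have "wn \<Delta> n (replicate k q) = []" for k
    proof (induction k)
      case (Suc k) then show ?case by (cases k) (auto simp: Edge_iff)
    qed simp
    ultimately show "wn \<Delta> n (map (V M) [0..<Suc M]) = wn \<Delta> n [q]" by (simp del: upt_Suc replicate_Suc)
  qed
  ultimately show ?thesis using weq_trans by fastforce
qed




abbreviation bv :: "'v::finite \<Rightarrow> real^'v" where "bv v \<equiv> axis v 1"

lemma bv_nth[simp]: "axis a (1::real) $ w = (if w = a then 1 else 0)" by (simp add: axis_def)

lemma hull_coord:
  fixes \<sigma> :: "'v::finite set"
  assumes "x \<in> convex hull (bv ` \<sigma>)"
  shows "(\<forall>v. 0 \<le> x$v) \<and> (\<Sum>v\<in>UNIV. x$v) = 1 \<and> (\<forall>v. v \<notin> \<sigma> \<longrightarrow> x$v = 0)"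
proof -
  define C where "C = {x::real^'v. (\<forall>v. 0 \<le> x$v) \<and> (\<Sum>v\<in>UNIV. x$v) = 1 \<and> (\<forall>v. v \<notin> \<sigma> \<longrightarrow> x$v = 0)}"
  have "convex C"
  proof (rule convexI)
    fix x y :: "real^'v" and u v :: real
    assume "x \<in> C" "y \<in> C" "0 \<le> u" "0 \<le> v" "u + v = 1"
    then show "u *\<^sub>R x + v *\<^sub>R y \<in> C"
      by (auto simp: C_def sum.distrib sum_distrib_left[symmetric])
  qed
  moreover have "bv ` \<sigma> \<subseteq> C" by (auto simp: C_def)
  ultimately have "convex hull (bv ` \<sigma>) \<subseteq> C" by (rule hull_minimal[rotated])
  then show ?thesis using assms by (auto simp: C_def)
qed

lemma real_coord: assumes "x \<in> realization \<Delta>"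
  shows "\<exists>\<sigma>\<in>\<Delta>. (\<forall>v. 0 \<le> x$v) \<and> (\<Sum>v\<in>UNIV. x$v) = 1 \<and> (\<forall>v. 0 < x$v \<longrightarrow> v \<in> \<sigma>)"
proof -
  have "x \<in> (\<Union>\<sigma>\<in>\<Delta>. convex hull (bv ` \<sigma>))" using assms by (simp only: realization_def)
  then obtain \<sigma> where s: "\<sigma> \<in> \<Delta>" "x \<in> convex hull (bv ` \<sigma>)" by auto
  note H = hull_coord[OF s(2)]
  have "\<forall>v. 0 < x$v \<longrightarrow> v \<in> \<sigma>" using H by auto
  then show ?thesis using H s(1) by blast
qed

lemma big_coord: fixes x :: "real^'v::finite" assumes "(\<Sum>v\<in>UNIV. x$v) = 1"
  shows "\<exists>w. 1 / real CARD('v) \<le> x$w"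
proof (rule ccontr)
  assume "\<not> ?thesis"
  then have "\<forall>w. x$w < 1 / real CARD('v)" by (simp add: not_le)
  then have "(\<Sum>v\<in>UNIV. x$v) < (\<Sum>v\<in>(UNIV::'v set). 1 / real CARD('v))"
    by (intro sum_strict_mono) auto
  also have "\<dots> = 1" by simp
  finally show False using assms by simp
qed

definition fv :: "real^'v::finite \<Rightarrow> 'v" where "fv x = (SOME w. 1 / real CARD('v) \<le> x$w)"

lemma fv: "(\<Sum>v\<in>UNIV. x$v) = 1 \<Longrightarrow> 1 / real CARD('v::finite) \<le> (x::real^'v) $ fv x"
  unfolding fv_def by (rule someI_ex[OF big_coord])

lemma fv_pos: "(\<Sum>v\<in>UNIV. x$v) = 1 \<Longrightarrow> 0 < x $ fv (x::real^'v::finite)"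
  using fv[of x] by (smt (verit) of_nat_0_less_iff zero_less_card_finite zero_less_divide_1_iff)

lemma fv_bv[simp]: "fv (bv a) = a"
proof -
  have "(\<Sum>v\<in>UNIV. bv a $ v) = 1" by simp
  from fv_pos[OF this] show ?thesis by (auto split: if_splits)
qed

definition gam :: "'v::finite list \<Rightarrow> real \<Rightarrow> real^'v" where
  "gam as t = (\<Sum>k<length as. max 0 (1 - \<bar>real (length as - 1) * t - real k\<bar>) *\<^sub>R bv (as!k))"

lemma gam_cont: "continuous_on A (gam as)"
  unfolding gam_def by (intro continuous_intros)

lemma gam_seg:
  assumes k: "Suc k < length as" and s1: "real k \<le> real (length as - 1) * t"
    and s2: "real (length as - 1) * t \<le> real k + 1"
  shows "gam as t = (real k + 1 - real (length as - 1) * t) *\<^sub>R bv (as!k)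
                  + (real (length as - 1) * t - real k) *\<^sub>R bv (as ! Suc k)"
proof -
  define s where "s = real (length as - 1) * t"
  define g where "g j = max 0 (1 - \<bar>s - real j\<bar>) *\<^sub>R bv (as!j)" for j
  have "gam as t = sum g {..<length as}" by (simp add: gam_def g_def s_def)
  also have "\<dots> = sum g {k, Suc k}"
  proof (rule sum.mono_neutral_right)
    show "\<forall>j\<in>{..<length as} - {k, Suc k}. g j = 0"
    proof
      fix j assume "j \<in> {..<length as} - {k, Suc k}"
      then have "j < k \<or> Suc (Suc k) \<le> j" by auto
      then have "real j + 1 \<le> real k \<or> real k + 2 \<le> real j" by (auto simp flip: of_nat_Suc)
      then have "1 \<le> \<bar>s - real j\<bar>" using s1 s2 unfolding s_def by linarith
      then show "g j = 0" by (simp add: g_def)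
    qed
  qed (use k in auto)
  also have "\<dots> = g k + g (Suc k)" by simp
  also have "\<dots> = (real k + 1 - s) *\<^sub>R bv (as!k) + (s - real k) *\<^sub>R bv (as ! Suc k)"
  proof -
    have s1': "real k \<le> s" and s2': "s \<le> real k + 1" using s1 s2 unfolding s_def by auto
    have "max 0 (1 - \<bar>s - real k\<bar>) = real k + 1 - s" using s1' s2' by (auto simp: max_def abs_if)
    moreover have "max 0 (1 - \<bar>s - real (Suc k)\<bar>) = s - real k" using s1' s2' by (auto simp: max_def abs_if)
    ultimately show ?thesis by (simp add: g_def)
  qed
  finally show ?thesis by (simp add: s_def)
qed

lemma gam_vertex:
  assumes "k < length as" "2 \<le> length as" "real (length as - 1) * t = real k"
  shows "gam as t = bv (as!k)"
proof (cases "Suc k < length as")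
  case True
  then show ?thesis using gam_seg[OF True] assms(3) by simp
next
  case False
  then obtain j where j: "k = Suc j" using assms by (cases k) auto
  have jl: "Suc j < length as" using j assms by simp
  have c1: "real j + 1 - real (length as - 1) * t = 0" and c2: "real (length as - 1) * t - real j = 1"
  proof -
    have "real k = real j + 1" using j by simp
    then show "real j + 1 - real (length as - 1) * t = 0" "real (length as - 1) * t - real j = 1"
      using assms(3) by linarith+
  qed
  have "gam as t = (real j + 1 - real (length as - 1) * t) *\<^sub>R bv (as!j)
                  + (real (length as - 1) * t - real j) *\<^sub>R bv (as ! Suc j)"
    by (rule gam_seg[OF jl]) (use c1 c2 in linarith)+
  then show ?thesis unfolding c1 c2 j by simp
qed

lemma seg_exists:
  assumes "2 \<le> length as" "0 \<le> t" "t \<le> 1"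
  shows "\<exists>k. Suc k < length as \<and> real k \<le> real (length as - 1) * t \<and> real (length as - 1) * t \<le> real k + 1"
proof -
  define L where "L = length as - 1"
  have L1: "1 \<le> L" using assms unfolding L_def by simp
  show ?thesis
  proof (cases "real L * t < real L")
    case True
    define k where "k = nat \<lfloor>real L * t\<rfloor>"
    have "real k = of_int \<lfloor>real L * t\<rfloor>" unfolding k_def using assms by simp
    then have "real k \<le> real L * t" "real L * t < real k + 1" by linarith+
    moreover have "k < L" using True \<open>real k \<le> real L * t\<close> by linarith
    ultimately show ?thesis unfolding L_def using L_def by (intro exI[of _ k]) auto
  next
    case False
    then have "real L * t = real L" using assms L1 by (smt (verit) mult_left_le of_nat_0_le_iff)
    then show ?thesis unfolding L_def using L1 L_def
      by (intro exI[of _ "L - 1"]) (auto simp: of_nat_diff)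
  qed
qed




lemma gam_in:
  assumes len: "2 \<le> length as" and adj: "\<forall>k. Suc k < length as \<longrightarrow> {as!k, as!Suc k} \<in> \<Delta>"
    and t: "0 \<le> t" "t \<le> 1"
  shows "gam as t \<in> realization \<Delta>"
proof -
  obtain k where k: "Suc k < length as" "real k \<le> real (length as - 1) * t"
      "real (length as - 1) * t \<le> real k + 1"
    using seg_exists[OF len t] by blast
  define s where "s = real (length as - 1) * t - real k"
  have s: "0 \<le> s" "s \<le> 1" using k by (auto simp: s_def)
  have c: "real k + 1 - real (length as - 1) * t = 1 - s" by (simp add: s_def)
  have g: "gam as t = (1 - s) *\<^sub>R bv (as!k) + s *\<^sub>R bv (as!Suc k)"
    using gam_seg[OF k] unfolding c s_def .
  have "(1 - s) *\<^sub>R bv (as!k) + s *\<^sub>R bv (as!Suc k) \<in> convex hull (bv ` {as!k, as!Suc k})"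
    apply (rule convexD[OF convex_convex_hull hull_inc hull_inc])
    apply (rule imageI, rule insertI1)
    apply (rule imageI, rule insertI2, rule insertI1)
    using s by simp_all
  then have "gam as t \<in> (\<Union>\<sigma>\<in>\<Delta>. convex hull (bv ` \<sigma>))" using adj k(1) g by blast
  then show ?thesis by (simp only: realization_def)
qed

lemma gam_pos:
  assumes k: "Suc k < length as" "real k \<le> real (length as - 1) * t"
      "real (length as - 1) * t \<le> real k + 1"
    and p: "0 < gam as t $ w"
  shows "w = as!k \<or> w = as!Suc k"
  using p unfolding gam_seg[OF k] by (auto split: if_splits)

lemma real_coord_sum: "x \<in> realization \<Delta> \<Longrightarrow> (\<Sum>v\<in>UNIV. x$v) = 1"
  using real_coord by blast

theorem loop_weq:
  fixes as :: "'v::finite list"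
  assumes sc: "simplicial_complex \<Delta>" and scn: "simply_connected (realization \<Delta>)"
    and len: "2 \<le> length as" and adj: "\<forall>k. Suc k < length as \<longrightarrow> {as!k, as!Suc k} \<in> \<Delta>"
    and q0: "as!0 = q" and q1: "as!(length as - 1) = q"
  shows "\<exists>K. weq \<Delta> K as [q]"
proof -
  have ne: "as \<noteq> []" using len by auto
  define L where "L = length as - 1"
  have L1: "1 \<le> L" using len by (simp add: L_def)
  define S where "S = realization \<Delta>"
  define \<gamma> where "\<gamma> = gam as"
  have p\<gamma>: "path \<gamma>" unfolding path_def \<gamma>_def by (rule gam_cont)
  have i\<gamma>: "path_image \<gamma> \<subseteq> S" unfolding path_image_def S_def \<gamma>_def using gam_in[OF len adj] by auto
  have s\<gamma>: "pathstart \<gamma> = bv q" unfolding pathstart_def \<gamma>_def using gam_vertex[of 0 as 0] len q0 ne by simp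
  have f\<gamma>: "pathfinish \<gamma> = bv q" unfolding pathfinish_def \<gamma>_def
    using gam_vertex[of "length as - 1" as 1] len q1 ne by simp
  have "homotopic_paths S \<gamma> (linepath (pathstart \<gamma>) (pathstart \<gamma>))"
    using scn[unfolded simply_connected_eq_contractible_path, THEN conjunct2, rule_format, of \<gamma>]
      p\<gamma> i\<gamma> s\<gamma> f\<gamma> unfolding S_def by simp
  then obtain h where hc: "continuous_on ({0..1} \<times> {0..1}) h" and hS: "h \<in> ({0..1} \<times> {0..1}) \<rightarrow> S"
     and h0: "\<forall>x\<in>{0..1}. h (0, x) = \<gamma> x" and h1: "\<forall>x\<in>{0..1}. h (1, x) = linepath (pathstart \<gamma>) (pathstart \<gamma>) x"
     and hse: "\<forall>t\<in>{0..1::real}. pathstart (h \<circ> Pair t) = pathstart \<gamma> \<and> pathfinish (h \<circ> Pair t) = pathfinish \<gamma>"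
    unfolding homotopic_paths by blast
  define Q where "Q = ({0..1} \<times> {0..1} :: (real \<times> real) set)"
  define N where "N = real CARD('v)"
  have N0: "0 < N" by (simp add: N_def)
  have "uniformly_continuous_on Q h" unfolding Q_def
    by (rule compact_uniformly_continuous[OF hc]) (intro compact_Times compact_Icc)
  moreover have "0 < 1 / (2 * N)" using N0 by simp
  ultimately obtain d where d0: "d > 0"
    and dh: "\<forall>x\<in>Q. \<forall>x'\<in>Q. dist x' x < d \<longrightarrow> dist (h x') (h x) < 1 / (2 * N)"
    unfolding uniformly_continuous_on_def by blast
  obtain r :: nat where r: "2 / d < real r" using reals_Archimedean2 by blast
  have r0: "0 < r" using r d0 by (metis divide_pos_pos of_nat_0_less_iff order.strict_trans zero_less_numeral)
  define M where "M = L * r"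
  have M0: "0 < M" using L1 r0 by (simp add: M_def)
  have "1 * r \<le> L * r" using L1 by (rule mult_le_mono1)
  then have rM: "real r \<le> real M" unfolding M_def of_nat_le_iff by simp
  have dM: "2 / real M < d"
  proof -
    have "2 / real M \<le> 2 / real r" using rM r0 by (simp add: frac_le)
    also have "2 / real r < d" using r d0 r0 by (simp add: field_simps)
    finally show ?thesis .
  qed
  define P where "P i j = (real i / real M, real j / real M)" for i j :: nat
  define V where "V i j = fv (h (P i j))" for i j
  have PQ: "i \<le> M \<Longrightarrow> j \<le> M \<Longrightarrow> P i j \<in> Q" for i j using M0 by (auto simp: P_def Q_def)
  have hR: "p \<in> Q \<Longrightarrow> h p \<in> realization \<Delta>" for p using hS by (auto simp: S_def Q_def)
  have key: "0 < h p $ fv (h p')" if "p \<in> Q" "p' \<in> Q" "dist p' p < d" for p p'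
  proof -
    define w where "w = fv (h p')"
    have f1: "1 / N \<le> h p' $ w" unfolding N_def w_def by (rule fv[OF real_coord_sum[OF hR[OF that(2)]]])
    have f2: "\<bar>h p $ w - h p' $ w\<bar> \<le> norm (h p - h p')"
      using component_le_norm_cart[of "h p - h p'" w] by simp
    have "dist (h p') (h p) < 1 / (2 * N)" using dh that by blast
    then have f3: "norm (h p - h p') < 1 / (2 * N)" by (simp add: dist_norm norm_minus_commute)
    have f4: "1 / (2 * N) < 1 / N" using N0 by (simp add: field_simps)
    from f1 f2 f3 f4 have "0 < h p $ w" by linarith
    then show ?thesis by (simp add: w_def)
  qed
  have dist_grid: "dist (P i' j') (P i j) < d" if "i \<le> i'" "i' \<le> Suc i" "j \<le> j'" "j' \<le> Suc j" for i j i' j'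
  proof -
    have gen: "\<bar>real a' / real M - real a / real M\<bar> \<le> 1 / real M" if "a \<le> a'" "a' \<le> Suc a" for a a' :: nat
    proof -
      have e: "\<bar>real a' / real M - real a / real M\<bar> = \<bar>real a' - real a\<bar> / real M"
        by (simp add: diff_divide_distrib[symmetric])
      have "\<bar>real a' - real a\<bar> \<le> 1" using that by (simp add: abs_le_iff)
      then show ?thesis unfolding e by (rule divide_right_mono) simp
    qed
    have a: "\<bar>real i' / real M - real i / real M\<bar> \<le> 1 / real M" using gen that by blast
    have b: "\<bar>real j' / real M - real j / real M\<bar> \<le> 1 / real M" using gen that by blast
    have "dist (P i' j') (P i j) = norm (real i' / real M - real i / real M, real j' / real M - real j / real M)"
      by (simp add: P_def dist_norm)
    also have "\<dots> \<le> norm (real i' / real M - real i / real M) + norm (real j' / real M - real j / real M)"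
      by (rule norm_Pair_le)
    also have "\<dots> \<le> 2 / real M" using a b by simp
    also have "\<dots> < d" by (rule dM)
    finally show ?thesis .
  qed
  have sq: "{V i j, V i (Suc j), V (Suc i) j, V (Suc i) (Suc j)} \<in> \<Delta>" if "i < M" "j < M" for i j
  proof -
    have iM: "i \<le> M" "j \<le> M" using that by auto
    obtain \<sigma> where \<sigma>: "\<sigma> \<in> \<Delta>" "\<forall>v. 0 < h (P i j) $ v \<longrightarrow> v \<in> \<sigma>"
      using real_coord[OF hR[OF PQ[OF iM]]] by blast
    have "V i' j' \<in> \<sigma>" if "i \<le> i'" "i' \<le> Suc i" "j \<le> j'" "j' \<le> Suc j" for i' j'
    proof -
      have "i' \<le> M" "j' \<le> M" using that \<open>i < M\<close> \<open>j < M\<close> by auto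
      then have "0 < h (P i j) $ V i' j'" unfolding V_def
        by (intro key PQ dist_grid that) (use \<open>i < M\<close> \<open>j < M\<close> in auto)
      then show ?thesis using \<sigma> by blast
    qed
    then have "{V i j, V i (Suc j), V (Suc i) j, V (Suc i) (Suc j)} \<subseteq> \<sigma>" by auto
    then show ?thesis by (rule sc_sub[OF sc \<sigma>(1)]) simp
  qed
  have lft: "V i 0 = q" if "i \<le> M" for i
  proof -
    have "real i / real M \<in> {0..1}" using that M0 by auto
    then have "h (real i / real M, 0) = bv q" using hse s\<gamma> by (auto simp: pathstart_def)
    then show ?thesis by (simp add: V_def P_def)
  qed
  have rgt: "V i M = q" if "i \<le> M" for i
  proof -
    have "real i / real M \<in> {0..1}" using that M0 by auto
    then have "h (real i / real M, 1) = bv q" using hse f\<gamma> by (auto simp: pathfinish_def)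
    then show ?thesis using M0 by (simp add: V_def P_def)
  qed
  have top: "V M j = q" if "j \<le> M" for j
  proof -
    have "real j / real M \<in> {0..1}" using that M0 by auto
    then have "h (1, real j / real M) = bv q" using h1 s\<gamma> by (simp add: linepath_refl)
    then show ?thesis using M0 by (simp add: V_def P_def)
  qed
  have G: "weq \<Delta> (4 * M * M) (map (V 0) [0..<Suc M]) [q]"
    by (rule grid[OF sc sq lft rgt top])
  have V0: "V 0 j = fv (\<gamma> (real j / real M))" if "j \<le> M" for j
  proof -
    have "real j / real M \<in> {0..1}" using that M0 by auto
    then show ?thesis using h0 by (simp add: V_def P_def)
  qed
  have B1: "V 0 (k * r) = as!k" if "k \<le> L" for k
  proof -
    have km: "k * r \<le> M" using that by (simp add: M_def)
    have "real L * (real (k * r) / real M) = real k" using r0 L1 by (simp add: M_def field_simps)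
    then have "\<gamma> (real (k * r) / real M) = bv (as!k)"
      unfolding \<gamma>_def using that len by (intro gam_vertex) (auto simp: L_def)
    then show ?thesis using V0[OF km] by simp
  qed
  have B2: "V 0 j \<in> {as!k, as!Suc k}" if "k < L" "k * r \<le> j" "j \<le> Suc k * r" for k j
  proof -
    have jm: "j \<le> M" using that by (metis Suc_leI le_trans M_def mult_le_mono1)
    define t where "t = real j / real M"
    have t01: "0 \<le> t" "t \<le> 1" using jm M0 by (auto simp: t_def)
    have Lt: "real L * t = real j / real r" using r0 L1 by (simp add: t_def M_def field_simps)
    have "real (k * r) \<le> real j" "real j \<le> real (Suc k * r)" using that by linarith+
    then have "real k \<le> real j / real r" "real j / real r \<le> real k + 1"
      using r0 by (simp_all add: field_simps)
    then have s12: "real k \<le> real (length as - 1) * t" "real (length as - 1) * t \<le> real k + 1"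
      using Lt by (simp_all add: L_def)
    have kl: "Suc k < length as" using that by (simp add: L_def)
    have "0 < gam as t $ fv (gam as t)"
      by (rule fv_pos[OF real_coord_sum[OF gam_in[OF len adj t01]]])
    from gam_pos[OF kl s12 this] show ?thesis using V0[OF jm] by (simp add: t_def \<gamma>_def)
  qed
  have BI: "weq \<Delta> (2 * k * r) (map (V 0) [0..<Suc (k * r)]) (take (Suc k) as)" if "k \<le> L" for k
    using that
  proof (induction k)
    case 0
    have "map (V 0) [0..<Suc (0 * r)] = take (Suc 0) as" using B1[of 0] len ne take_Suc_conv_app_nth[of 0 as] by simp
    then show ?case by (simp add: weq_refl)
  next
    case (Suc k)
    then have kL: "k < L" by simp
    define a where "a = as!k"
    define b where "b = as!Suc k"
    define pre' where "pre' = map (V 0) [0..<k * r]"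
    define ws where "ws = map (V 0) [Suc (k * r)..<Suc k * r]"
    have u1: "[0..<Suc (Suc k * r)] = [0..<Suc (k * r)] @ [Suc (k * r)..<Suc k * r] @ [Suc k * r]"
    proof -
      have eq: "Suc k * r = Suc (k * r) + (r - 1)" using r0 by simp
      have "[0..<Suc (Suc k * r)] = [0..<Suc k * r] @ [Suc k * r]" by (rule upt_Suc_append) simp
      also have "[0..<Suc k * r] = [0..<Suc (k * r)] @ [Suc (k * r)..<Suc k * r]"
        unfolding eq by (rule upt_add_eq_append) simp
      finally show ?thesis by (simp only: append_assoc)
    qed
    have pre: "map (V 0) [0..<Suc (k * r)] = pre' @ [a]"
      using B1[of k] kL by (simp add: pre'_def a_def)
    have whole: "map (V 0) [0..<Suc (Suc k * r)] = pre' @ (a # ws @ [b]) @ []"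
      unfolding u1 using pre B1[of "Suc k"] Suc.prems by (simp add: ws_def b_def)
    have \<sigma>: "{a, b} \<in> \<Delta>" using adj kL by (simp add: a_def b_def L_def)
    have wsin: "set ws \<subseteq> {a, b}"
    proof
      fix x assume "x \<in> set ws"
      then obtain j where j: "Suc (k * r) \<le> j" "j < Suc k * r" "x = V 0 j" by (auto simp: ws_def)
      have "k * r \<le> j" "j \<le> Suc k * r" using j by auto
      from B2[OF kL this] show "x \<in> {a, b}" using j(3) by (simp add: a_def b_def)
    qed
    have lws: "length ws = r - 1" by (simp add: ws_def)
    have s1: "weq \<Delta> (2 * length ws) (a # ws @ [b]) [a, b]"
      by (rule weq_simplex[OF sc \<sigma>]) (use wsin in auto)
    have s1': "weq \<Delta> (2 * length ws) (pre' @ (a # ws @ [b]) @ []) (pre' @ [a, b] @ [])"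
      by (rule weq_ctx[OF s1]) auto
    have IH: "weq \<Delta> (2 * k * r) (pre' @ [a]) (take (Suc k) as)"
      using Suc.IH kL pre by simp
    have tk: "take (Suc k) as = take k as @ [a]" "take (Suc (Suc k)) as = take (Suc k) as @ [b]"
      using kL by (simp_all add: take_Suc_conv_app_nth a_def b_def L_def)
    have hd0: "hd (pre' @ [a]) = hd (take (Suc k) as)"
    proof -
      have "hd (pre' @ [a]) = V 0 0" using pre[symmetric] by (simp add: hd_map del: upt_Suc) 
      also have "\<dots> = as!0" using B1[of 0] by simp
      finally show ?thesis using len ne by (simp add: hd_conv_nth)
    qed
    have s2: "weq \<Delta> (2 * k * r) ([] @ (pre' @ [a]) @ [b]) ([] @ take (Suc k) as @ [b])"
      by (rule weq_ctx[OF IH]) (use hd0 tk in auto)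
    have s1'': "weq \<Delta> (2 * length ws) (map (V 0) [0..<Suc (Suc k * r)]) (pre' @ [a, b])"
      using s1' unfolding whole by simp
    have s2': "weq \<Delta> (2 * k * r) (pre' @ [a, b]) (take (Suc (Suc k)) as)"
      using s2 unfolding tk(2) by simp
    have "weq \<Delta> (2 * length ws + 2 * k * r) (map (V 0) [0..<Suc (Suc k * r)]) (take (Suc (Suc k)) as)"
      by (rule weq_trans[OF s1'' s2'])
    then show ?case by (rule weq_mono) (use lws r0 in \<open>simp add: algebra_simps\<close>)
  qed
  have "weq \<Delta> (2 * L * r) (map (V 0) [0..<Suc M]) as"
    using BI[OF order_refl] len by (simp add: M_def L_def)
  from weq_trans[OF weq_sym[OF this] G] show ?thesis by blast
qed




lemma path_app: "comb_path_from E u xs w \<Longrightarrow> comb_path_from E w ys v \<Longrightarrow> comb_path_from E u (xs @ ys) v"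
  by (induction xs arbitrary: u) auto

lemma path_app_iff: "comb_path_from E u (xs @ ys) v \<longleftrightarrow> (\<exists>w. comb_path_from E u xs w \<and> comb_path_from E w ys v)"
  by (induction xs arbitrary: u) auto

lemma path_split:
  assumes "comb_path_from E u es v" "i \<le> length es"
  shows "comb_path_from E u (take i es) ((u # map tau es) ! i) \<and> comb_path_from E ((u # map tau es) ! i) (drop i es) v"
  using assms
proof (induction es arbitrary: u i)
  case Nil then show ?case by simp
next
  case (Cons e es)
  show ?case
  proof (cases i)
    case 0 then show ?thesis using Cons.prems by simp
  next
    case (Suc i')
    have "comb_path_from E (tau e) es v" "e \<in> E" "iota e = u" using Cons.prems by auto
    from Cons.IH[OF this(1), of i'] Cons.prems Suc this(2,3) show ?thesis
      by (cases i') auto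
  qed
qed

lemma shortcut:
  assumes p: "comb_path_from E u es v" and ns: "\<not> simple_path u es"
  shows "\<exists>es'. comb_path_from E u es' v \<and> length es' < length es"
proof -
  define vs where "vs = u # map tau es"
  from ns obtain i j where ij: "i < j" "j < length vs" "vs ! i = vs ! j"
    unfolding simple_path_def vs_def[symmetric] distinct_conv_nth
    by (metis linorder_neqE_nat)
  have jl: "j \<le> length es" "i \<le> length es" using ij by (auto simp: vs_def)
  have A: "comb_path_from E u (take i es) (vs ! i)" using path_split[OF p jl(2)] by (simp add: vs_def)
  have B: "comb_path_from E (vs ! j) (drop j es) v" using path_split[OF p jl(1)] by (simp add: vs_def)
  show ?thesis
    by (rule exI[of _ "take i es @ drop j es"]) (use path_app[OF A] B ij jl in auto)
qed

lemma geodesic: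
  assumes st: "spanning_tree \<Delta> T" and uv: "u \<in> vertices \<Delta>" "v \<in> vertices \<Delta>"
  shows "comb_path_from (tree_edges T) u (tree_geodesic T u v) v"
proof -
  let ?E = "tree_edges T"
  let ?P = "\<lambda>es. comb_path_from ?E u es v \<and> (\<forall>es'. comb_path_from ?E u es' v \<longrightarrow> length es \<le> length es')"
  have uniq: "\<exists>!es. comb_path_from ?E u es v \<and> simple_path u es"
    using st uv unfolding spanning_tree_def by blast
  then obtain es0 where "comb_path_from ?E u es0 v" by blast
  then obtain es1 where es1: "comb_path_from ?E u es1 v" "\<forall>y. comb_path_from ?E u y v \<longrightarrow> length es1 \<le> length y"
    using ex_has_least_nat[of "\<lambda>es. comb_path_from ?E u es v" es0 length] by blast
  have simp_of: "simple_path u es" if "?P es" for es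
    using shortcut[of ?E u es v] that by (meson not_less)
  have "?P es1" using es1 by blast
  moreover have "es = es1" if "?P es" for es
    using uniq simp_of[OF that] simp_of[OF \<open>?P es1\<close>] that es1 by blast
  ultimately have "\<exists>!es. ?P es" by blast
  then have "?P (tree_geodesic T u v)" unfolding tree_geodesic_def by (rule theI')
  then show ?thesis by blast
qed

lemma tree_edges_sub: "spanning_tree \<Delta> T \<Longrightarrow> tree_edges T \<subseteq> Edge \<Delta>"
  by (auto simp: spanning_tree_def tree_edges_def Edge_def)

lemma path_mono: "comb_path_from E u c v \<Longrightarrow> E \<subseteq> E' \<Longrightarrow> comb_path_from E' u c v"
  by (induction c arbitrary: u) auto

lemma wn_path: "comb_path_from (Edge \<Delta>) u c v \<Longrightarrow> wn \<Delta> n (u # map tau c) = concat (map (\<lambda>e. letter_pow e n) c)"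
proof (induction c arbitrary: u)
  case Nil then show ?case by simp
next
  case (Cons e c)
  then have "e = (u, tau e)" "e \<in> Edge \<Delta>" by (auto simp: iota_def tau_def)
  then show ?case using Cons by (cases c) (auto simp: iota_def tau_def)
qed

lemma path_adj: "comb_path_from (Edge \<Delta>) u c v \<Longrightarrow> Suc k < length (u # map tau c) \<Longrightarrow>
   {(u # map tau c) ! k, (u # map tau c) ! Suc k} \<in> \<Delta>"
proof (induction c arbitrary: u k)
  case Nil then show ?case by simp
next
  case (Cons e c)
  then have e: "e \<in> Edge \<Delta>" "iota e = u" by auto
  show ?case
  proof (cases k)
    case 0 then show ?thesis using e by (auto simp: Edge_def iota_def tau_def)
  next
    case (Suc k') then show ?thesis using Cons by auto
  qed
qed

lemma path_last: "comb_path_from E u c v \<Longrightarrow> (u # map tau c) ! length c = v"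
  by (induction c arbitrary: u) auto

lemma edge_word_bound:
  assumes sc: "simplicial_complex \<Delta>" and scn: "simply_connected (realization \<Delta>)"
    and q: "q \<in> vertices \<Delta>" and st: "spanning_tree \<Delta> T" and e: "e \<in> Edge \<Delta>"
  shows "\<exists>K::nat. \<forall>n. Area_H \<Delta> (p_n T n q (iota e) @ letter_pow e n @ p_n T n (tau e) q) \<le> K * (nat \<bar>n\<bar>)^2"
proof -
  have ve: "iota e \<in> vertices \<Delta>" "tau e \<in> vertices \<Delta>"
    using e by (auto simp: Edge_def vertices_def iota_def tau_def)
  define g1 where "g1 = tree_geodesic T q (iota e)"
  define g2 where "g2 = tree_geodesic T (tau e) q"
  have p1: "comb_path_from (Edge \<Delta>) q g1 (iota e)"
    unfolding g1_def by (rule path_mono[OF geodesic[OF st q ve(1)] tree_edges_sub[OF st]])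
  have p2: "comb_path_from (Edge \<Delta>) (tau e) g2 q"
    unfolding g2_def by (rule path_mono[OF geodesic[OF st ve(2) q] tree_edges_sub[OF st]])
  define c where "c = g1 @ [e] @ g2"
  have pc: "comb_path_from (Edge \<Delta>) q c q"
    unfolding c_def by (rule path_app[OF p1]) (use e p2 in simp)
  define as where "as = q # map tau c"
  have len: "2 \<le> length as" by (simp add: as_def c_def)
  have adj: "\<forall>k. Suc k < length as \<longrightarrow> {as!k, as!Suc k} \<in> \<Delta>"
    unfolding as_def using path_adj[OF pc] by blast
  have q0: "as ! 0 = q" by (simp add: as_def)
  have q1: "as ! (length as - 1) = q" using path_last[OF pc] by (simp add: as_def)
  obtain K where K: "weq \<Delta> K as [q]" using loop_weq[OF sc scn len adj q0 q1] by blast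
  have w: "wn \<Delta> n as = p_n T n q (iota e) @ letter_pow e n @ p_n T n (tau e) q" for n
    unfolding as_def wn_path[OF pc] by (simp add: c_def p_n_def g1_def g2_def)
  show ?thesis
  proof (rule exI[of _ K], rule allI)
    fix n
    have "eqa \<Delta> (K * (nat \<bar>n\<bar>)^2) (wn \<Delta> n as) []" using K unfolding weq_def by simp
    then have "fills \<Delta> (wn \<Delta> n as) (K * (nat \<bar>n\<bar>)^2)" by (rule eqa_fills)
    then show "Area_H \<Delta> (p_n T n q (iota e) @ letter_pow e n @ p_n T n (tau e) q) \<le> K * (nat \<bar>n\<bar>)^2"
      unfolding w by (rule Area_le)
  qed
qed

theorem lemma4p7:
  fixes \<Delta> :: "('v::finite) set set" and T :: "'v set set" and q :: 'v
  assumes "simplicial_complex \<Delta>"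
    and "flag \<Delta>"
    and "simply_connected (realization \<Delta>)"
    and "q \<in> vertices \<Delta>"
    and "spanning_tree \<Delta> T"
  shows "\<exists>K::real. \<forall>e\<in>Edge \<Delta>. \<forall>n::int.
           real (Area_H \<Delta> (p_n T n q (iota e) @ letter_pow e n @ p_n T n (tau e) q))
             \<le> K * \<bar>real_of_int n\<bar>^2"
proof -
  have "\<forall>e\<in>Edge \<Delta>. \<exists>K::nat. \<forall>n. Area_H \<Delta> (p_n T n q (iota e) @ letter_pow e n @ p_n T n (tau e) q) \<le> K * (nat \<bar>n\<bar>)^2"
    using edge_word_bound[OF assms(1,3,4,5)] by blast
  then obtain Kf where Kf: "\<forall>e\<in>Edge \<Delta>. \<forall>n. Area_H \<Delta> (p_n T n q (iota e) @ letter_pow e n @ p_n T n (tau e) q) \<le> Kf e * (nat \<bar>n\<bar>)^2"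
    by metis
  define K where "K = (\<Sum>e\<in>Edge \<Delta>. real (Kf e))"
  show ?thesis
  proof (rule exI[of _ K], intro ballI allI)
    fix e n assume e: "e \<in> Edge \<Delta>"
    have fin: "finite (Edge \<Delta>)" by simp
    have "real (Area_H \<Delta> (p_n T n q (iota e) @ letter_pow e n @ p_n T n (tau e) q)) \<le> real (Kf e * (nat \<bar>n\<bar>)^2)"
      using Kf e by (simp only: of_nat_le_iff)
    also have "\<dots> = real (Kf e) * \<bar>real_of_int n\<bar>^2" by simp
    also have "\<dots> \<le> K * \<bar>real_of_int n\<bar>^2"
      unfolding K_def by (rule mult_right_mono[OF member_le_sum[OF e _ fin]]) auto
    finally show "real (Area_H \<Delta> (p_n T n q (iota e) @ letter_pow e n @ p_n T n (tau e) q)) \<le> K * \<bar>real_of_int n\<bar>^2" .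
  qed
qed


end
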